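(* In $E^{\infty}_8$ let $b_k$ be the number of elements of length $k$ and, for $k\ge1$ and $1\le i\le8$, let $b_{k;i}$ be the number of elements of length $k$ whose smallest representative word in length-lexicographic order (with $x_1<\cdots<x_8$) begins with $x_i$. Then $b_0=1$, $b_{1;i}=1$, $b_k=\sum_{i=1}^8b_{k;i}$ for $k\ge1$, and for $k\ge2$: $$b_{k;j}=\sum_{i=\max(1,j-1)}^{8}b_{k-1;i}\quad(j\ne5),\qquad b_{k;5}=b_{k-1;3}+\sum_{i=5}^8b_{k-1;i}.$$
   Context: $E^{\infty}_8=\langle x_1,\dots,x_8\mid x_ix_j=x_jx_i \text{ whenever } \{x_i,x_j\}\text{ is not an edge}\rangle$, where the edges are $x_1x_2$, $x_2x_3$, $x_3x_4$, $x_3x_5$, $x_5x_6$, $x_6x_7$, $x_7x_8$. *)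

theory Defs
  imports Main
begin

text \<open>Generators x_1..x_8 are represented by the naturals 1..8.
  Edges of the E_8 diagram; non-adjacent generators commute.\<close>

definition E8_adj :: "nat \<Rightarrow> nat \<Rightarrow> bool" where
  "E8_adj a b \<longleftrightarrow> {a, b} \<in> {{1,2},{2,3},{3,4},{3,5},{5,6},{6,7},{7,8}}"

definition E8_words :: "nat list set" where
  "E8_words = {w. set w \<subseteq> {1..8}}"

definition E8_step :: "nat list \<Rightarrow> nat list \<Rightarrow> bool" where
  "E8_step u v \<longleftrightarrow> (\<exists>xs ys a b. u = xs @ [a, b] @ ys \<and> v = xs @ [b, a] @ ys \<and> \<not> E8_adj a b)"

text \<open>Equivalence class of a word: the element of the monoid it represents.\<close>
definition E8_class :: "nat list \<Rightarrow> nat list set" where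
  "E8_class w = {v. (sup E8_step (E8_step\<inverse>\<inverse>))\<^sup>*\<^sup>* w v}"

definition E8_elems :: "nat \<Rightarrow> nat list set set" where
  "E8_elems k = {E8_class w | w. w \<in> E8_words \<and> length w = k}"

definition E8_b :: "nat \<Rightarrow> nat" where
  "E8_b k = card (E8_elems k)"

definition llex_less :: "nat list \<Rightarrow> nat list \<Rightarrow> bool" where
  "llex_less u v \<longleftrightarrow> length u < length v \<or>
     (length u = length v \<and> (u, v) \<in> lexord {(a, b). a < b})"

definition smallest_rep :: "nat list set \<Rightarrow> nat list \<Rightarrow> bool" where
  "smallest_rep C w \<longleftrightarrow> w \<in> C \<and> (\<forall>v\<in>C. v \<noteq> w \<longrightarrow> llex_less w v)"

definition E8_bi :: "nat \<Rightarrow> nat \<Rightarrow> nat" where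
  "E8_bi k i = card {C \<in> E8_elems k. \<exists>w. smallest_rep C w \<and> w \<noteq> [] \<and> hd w = i}"

end

theory Submission
  imports Defs "HOL-Library.List_Lexorder"
begin

lemma adj_sym: "E8_adj a b = E8_adj b a"
  by (simp add: E8_adj_def insert_commute)

lemma step_sym: "E8_step u v \<Longrightarrow> E8_step v u"
  unfolding E8_step_def using adj_sym by blast

lemma sup_conv: "sup E8_step (E8_step\<inverse>\<inverse>) = E8_step"
  by (auto intro!: ext intro: step_sym)

lemma class_eq: "E8_class w = {v. E8_step\<^sup>*\<^sup>* w v}"
  unfolding E8_class_def sup_conv ..

lemma eqv_sym: "E8_step\<^sup>*\<^sup>* u v \<Longrightarrow> E8_step\<^sup>*\<^sup>* v u"
  by (induction rule: rtranclp_induct)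
     (auto intro: converse_rtranclp_into_rtranclp step_sym)

lemma eqv_trans: "E8_step\<^sup>*\<^sup>* u v \<Longrightarrow> E8_step\<^sup>*\<^sup>* v w \<Longrightarrow> E8_step\<^sup>*\<^sup>* u w"
  by (rule rtranclp_trans)

lemma step_Cons: "E8_step u v \<Longrightarrow> E8_step (x#u) (x#v)"
  unfolding E8_step_def by (metis append_Cons)

lemma eqv_Cons: "E8_step\<^sup>*\<^sup>* u v \<Longrightarrow> E8_step\<^sup>*\<^sup>* (x#u) (x#v)"
  by (induction rule: rtranclp_induct) (auto intro: rtranclp.rtrancl_into_rtrancl step_Cons)

lemma step_len: "E8_step u v \<Longrightarrow> length u = length v"
  unfolding E8_step_def by auto

lemma step_set: "E8_step u v \<Longrightarrow> set u = set v"
  unfolding E8_step_def by auto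

lemma eqv_len: "E8_step\<^sup>*\<^sup>* u v \<Longrightarrow> length u = length v"
  by (induction rule: rtranclp_induct) (auto dest: step_len)

lemma eqv_set: "E8_step\<^sup>*\<^sup>* u v \<Longrightarrow> set u = set v"
  by (induction rule: rtranclp_induct) (auto dest: step_set)

lemma swap: "\<not> E8_adj a b \<Longrightarrow> E8_step\<^sup>*\<^sup>* (a#b#u) (b#a#u)"
proof -
  assume "\<not> E8_adj a b"
  then have "E8_step (a#b#u) (b#a#u)"
    unfolding E8_step_def by (rule_tac x="[]" in exI) auto
  then show ?thesis by auto
qed

lemma step_decomp:
  assumes "E8_step (b#v) z"
  shows "(\<exists>v'. E8_step v v' \<and> z = b#v') \<or> (\<exists>c v2. v = c#v2 \<and> z = c#b#v2 \<and> \<not> E8_adj b c)"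
proof -
  obtain xs ys a c where h: "b#v = xs @ [a, c] @ ys" "z = xs @ [c, a] @ ys" "\<not> E8_adj a c"
    using assms unfolding E8_step_def by blast
  show ?thesis
  proof (cases xs)
    case Nil then show ?thesis using h by auto
  next
    case (Cons x xs')
    then have "E8_step v (xs' @ [c, a] @ ys)" "z = b # (xs' @ [c, a] @ ys)"
      using h unfolding E8_step_def by auto
    then show ?thesis by blast
  qed
qed

definition P3 :: "nat \<Rightarrow> nat list \<Rightarrow> nat \<Rightarrow> nat list \<Rightarrow> bool" where
  "P3 a u b v \<longleftrightarrow> (a=b \<and> E8_step\<^sup>*\<^sup>* u v) \<or>
     (a\<noteq>b \<and> \<not>E8_adj a b \<and> (\<exists>w. E8_step\<^sup>*\<^sup>* u (b#w) \<and> E8_step\<^sup>*\<^sup>* v (a#w)))"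

lemma F3: "E8_step\<^sup>*\<^sup>* (a#u) (b#v) \<Longrightarrow> P3 a u b v"
proof (induction "length u" arbitrary: a u b v rule: less_induct)
  case less
  have main: "E8_step\<^sup>*\<^sup>* (a#u) y \<Longrightarrow> \<forall>b v. y = b#v \<longrightarrow> P3 a u b v" for y
  proof (induction rule: rtranclp_induct)
    case base then show ?case by (auto simp: P3_def)
  next
    case (step y z)
    have "length y = Suc (length u)" using eqv_len[OF step(1)] by simp
    then obtain b v where y: "y = b#v" by (cases y) auto
    have IH: "P3 a u b v" using step(3) y by auto
    from step_decomp[OF step(2)[unfolded y]] show ?case
    proof
      assume "\<exists>v'. E8_step v v' \<and> z = b#v'"
      then obtain v' where v': "E8_step v v'" "z = b#v'" by blast
      have "E8_step\<^sup>*\<^sup>* v v'" "E8_step\<^sup>*\<^sup>* v' v" using v' step_sym by auto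
      then show ?case using IH v' unfolding P3_def by (blast intro: eqv_trans)
    next
      assume "\<exists>c v2. v = c#v2 \<and> z = c#b#v2 \<and> \<not> E8_adj b c"
      then obtain c v2 where cv: "v = c#v2" "z = c#b#v2" "\<not> E8_adj b c" by blast
      have lenv2: "length v2 < length u"
        using eqv_len[OF step(1)] y cv by simp
      have "P3 a u c (b#v2)"
        using IH[unfolded P3_def]
      proof (elim disjE conjE exE)
        assume ab: "a = b" and uv: "E8_step\<^sup>*\<^sup>* u v"
        show ?thesis
        proof (cases "c = a")
          case True then show ?thesis using ab uv cv unfolding P3_def by auto
        next
          case False then show ?thesis using ab uv cv adj_sym unfolding P3_def by auto
        qed
      next
        fix w assume ab: "a \<noteq> b" "\<not> E8_adj a b" and uw: "E8_step\<^sup>*\<^sup>* u (b#w)"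
          and vw: "E8_step\<^sup>*\<^sup>* v (a#w)"
        have P: "P3 c v2 a w" using less(1)[OF lenv2] vw cv by simp
        show ?thesis
        proof (cases "c = a")
          case True
          then have "E8_step\<^sup>*\<^sup>* v2 w" using P unfolding P3_def by auto
          then have "E8_step\<^sup>*\<^sup>* u (b#v2)"
            using uw by (meson eqv_Cons eqv_sym eqv_trans)
          then show ?thesis using True unfolding P3_def by auto
        next
          case False
          then obtain z' where z': "\<not> E8_adj c a" "E8_step\<^sup>*\<^sup>* v2 (a#z')" "E8_step\<^sup>*\<^sup>* w (c#z')"
            using P unfolding P3_def by auto
          have "E8_step\<^sup>*\<^sup>* u (c#b#z')"
            using uw eqv_Cons[OF z'(3), of b] swap[OF cv(3), of z'] by (blast intro: eqv_trans)
          moreover have "E8_step\<^sup>*\<^sup>* (b#v2) (a#b#z')"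
            using eqv_Cons[OF z'(2), of b] swap[of b a z'] ab adj_sym by (blast intro: eqv_trans)
          ultimately show ?thesis using False z'(1) adj_sym unfolding P3_def by auto
        qed
      qed
      then show ?case using cv by auto
    qed
  qed
  show ?case using main[OF less(2)] by auto
qed

definition isnf :: "nat list \<Rightarrow> bool" where
  "isnf w \<longleftrightarrow> (\<forall>v. E8_step\<^sup>*\<^sup>* w v \<longrightarrow> w \<le> v)"

lemma llex_same: "length u = length v \<Longrightarrow> llex_less u v \<longleftrightarrow> u < v"
  by (simp add: llex_less_def list_less_def)

lemma smallest_rep_iff: "smallest_rep (E8_class w) w \<longleftrightarrow> isnf w"
  unfolding smallest_rep_def isnf_def class_eq
  by (auto simp: llex_same eqv_len order_le_less)

lemma nf_unique: "isnf x \<Longrightarrow> isnf y \<Longrightarrow> E8_step\<^sup>*\<^sup>* x y \<Longrightarrow> x = y"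
  unfolding isnf_def by (meson antisym eqv_sym)

lemma class_fin: "finite (E8_class w)"
proof -
  have "E8_class w \<subseteq> {v. set v \<subseteq> set w \<and> length v = length w}"
    unfolding class_eq using eqv_len eqv_set by auto
  then show ?thesis using finite_lists_length_eq[of "set w" "length w"] finite_subset by auto
qed

lemma nf_exists: "\<exists>x. E8_step\<^sup>*\<^sup>* w x \<and> isnf x"
proof -
  define x where "x = Min (E8_class w)"
  have ne: "E8_class w \<noteq> {}" unfolding class_eq by auto
  have "x \<in> E8_class w" unfolding x_def using Min_in[OF class_fin ne] .
  then have wx: "E8_step\<^sup>*\<^sup>* w x" unfolding class_eq by auto
  have "isnf x" unfolding isnf_def
  proof (intro allI impI)
    fix v assume "E8_step\<^sup>*\<^sup>* x v"
    then have "v \<in> E8_class w" using wx unfolding class_eq by (auto intro: eqv_trans)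
    then show "x \<le> v" unfolding x_def using Min_le[OF class_fin] by auto
  qed
  then show ?thesis using wx by blast
qed

lemma class_same: "E8_step\<^sup>*\<^sup>* w x \<Longrightarrow> E8_class w = E8_class x"
  unfolding class_eq by (auto intro: eqv_trans eqv_sym)

lemma nf_tl: "isnf (j#v) \<Longrightarrow> isnf v"
  unfolding isnf_def using eqv_Cons by fastforce

lemma nf_hd: "isnf (j#i#v1) \<Longrightarrow> \<not> (i < j \<and> \<not> E8_adj i j)"
proof
  assume n: "isnf (j#i#v1)" and h: "i < j \<and> \<not> E8_adj i j"
  then have "E8_step\<^sup>*\<^sup>* (j#i#v1) (i#j#v1)" using swap adj_sym by metis
  then have "j#i#v1 \<le> i#j#v1" using n unfolding isnf_def by blast
  then show False using h by auto
qed

lemma adj_iff: "E8_adj i j \<longleftrightarrow> (i=1\<and>j=2 \<or> i=2\<and>j=1 \<or> i=2\<and>j=3 \<or> i=3\<and>j=2 \<or> i=3\<and>j=4 \<or> i=4\<and>j=3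
   \<or> i=3\<and>j=5 \<or> i=5\<and>j=3 \<or> i=5\<and>j=6 \<or> i=6\<and>j=5 \<or> i=6\<and>j=7 \<or> i=7\<and>j=6 \<or> i=7\<and>j=8 \<or> i=8\<and>j=7)"
  unfolding E8_adj_def by (simp only: insert_iff empty_iff doubleton_eq_iff) argo
lemma triple: "i < a \<Longrightarrow> a < j \<Longrightarrow> \<not> E8_adj i a \<Longrightarrow> \<not> E8_adj a j \<Longrightarrow> \<not> E8_adj i j"
proof
  assume h: "i < a" "a < j" "\<not> E8_adj i a" "\<not> E8_adj a j" "E8_adj i j"
  have "i = 3 \<and> j = 5" using h(1,2,5) unfolding adj_iff by linarith
  then have "a = 4" using h(1,2) by simp
  then show False using h(3) \<open>i = 3 \<and> j = 5\<close> unfolding adj_iff by simp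
qed

lemma nf_cons:
  assumes n: "isnf (i#v1)" and c: "\<not> (i < j \<and> \<not> E8_adj i j)"
  shows "isnf (j#i#v1)"
  unfolding isnf_def
proof (intro allI impI)
  fix u assume ju: "E8_step\<^sup>*\<^sup>* (j#i#v1) u"
  show "j#i#v1 \<le> u"
  proof (rule ccontr)
    assume "\<not> j#i#v1 \<le> u"
    then have lt: "u < j#i#v1" by auto
    obtain a u1 where u: "u = a#u1" using eqv_len[OF ju] by (cases u) auto
    have P: "P3 j (i#v1) a u1" using F3 ju u by simp
    show False
    proof (cases "a = j")
      case True
      then have "E8_step\<^sup>*\<^sup>* (i#v1) u1" using P unfolding P3_def by auto
      then have "i#v1 \<le> u1" using n unfolding isnf_def by blast
      then show False using lt u True by auto
    next
      case False
      then obtain w where w: "\<not> E8_adj j a" "E8_step\<^sup>*\<^sup>* (i#v1) (a#w)"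
        using P unfolding P3_def by auto
      have aj: "a < j" using lt u False by auto
      have "i#v1 \<le> a#w" using n w(2) unfolding isnf_def by blast
      then have "i < a \<or> i = a" by auto
      then show False
      proof
        assume "i = a" then show False using c aj w(1) adj_sym by auto
      next
        assume ia: "i < a"
        then have "\<not> E8_adj i a" using F3[OF w(2)] unfolding P3_def by auto
        then show False using triple[OF ia aj] w(1) adj_sym c aj ia by auto
      qed
    qed
  qed
qed

definition NF :: "nat \<Rightarrow> nat list set" where
  "NF k = {w. set w \<subseteq> {1..8} \<and> length w = k \<and> isnf w}"

definition NFi :: "nat \<Rightarrow> nat \<Rightarrow> nat list set" where
  "NFi k i = {w \<in> NF k. w \<noteq> [] \<and> hd w = i}"

lemma NF_fin: "finite (NF k)"
  using finite_lists_length_eq[of "{1..8::nat}" k] unfolding NF_def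
  by (rule finite_subset[rotated]) auto

lemma class_inj: "inj_on E8_class (NF k)"
proof (rule inj_onI)
  fix x y assume "x \<in> NF k" "y \<in> NF k" "E8_class x = E8_class y"
  then have "y \<in> E8_class x" "isnf x" "isnf y" unfolding class_eq NF_def by auto
  then show "x = y" using nf_unique unfolding class_eq by auto
qed

lemma elems_eq: "E8_elems k = E8_class ` NF k"
proof
  show "E8_elems k \<subseteq> E8_class ` NF k"
  proof
    fix C assume "C \<in> E8_elems k"
    then obtain w where w: "C = E8_class w" "set w \<subseteq> {1..8}" "length w = k"
      unfolding E8_elems_def E8_words_def by auto
    obtain x where x: "E8_step\<^sup>*\<^sup>* w x" "isnf x" using nf_exists by blast
    have "x \<in> NF k" using x w eqv_len[OF x(1)] eqv_set[OF x(1)] unfolding NF_def by auto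
    then show "C \<in> E8_class ` NF k" using class_same[OF x(1)] w by auto
  qed
next
  show "E8_class ` NF k \<subseteq> E8_elems k"
    unfolding E8_elems_def E8_words_def NF_def by auto
qed

lemma bi_set: "{C \<in> E8_elems k. \<exists>w. smallest_rep C w \<and> w \<noteq> [] \<and> hd w = i} = E8_class ` NFi k i"
proof
  show "{C \<in> E8_elems k. \<exists>w. smallest_rep C w \<and> w \<noteq> [] \<and> hd w = i} \<subseteq> E8_class ` NFi k i"
  proof
    fix C assume "C \<in> {C \<in> E8_elems k. \<exists>w. smallest_rep C w \<and> w \<noteq> [] \<and> hd w = i}"
    then obtain x w where x: "x \<in> NF k" "C = E8_class x" and w: "smallest_rep C w" "w \<noteq> []" "hd w = i"
      using elems_eq by auto
    have xw: "E8_step\<^sup>*\<^sup>* x w" using w(1) x(2) unfolding smallest_rep_def class_eq by auto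
    have Cw: "C = E8_class w" using class_same[OF xw] x by simp
    have "isnf w" using w(1) Cw smallest_rep_iff by simp
    then have "w \<in> NFi k i" using x(1) w eqv_len[OF xw] eqv_set[OF xw] unfolding NFi_def NF_def by auto
    then show "C \<in> E8_class ` NFi k i" using Cw by auto
  qed
next
  show "E8_class ` NFi k i \<subseteq> {C \<in> E8_elems k. \<exists>w. smallest_rep C w \<and> w \<noteq> [] \<and> hd w = i}"
    using smallest_rep_iff elems_eq unfolding NFi_def NF_def by auto
qed

lemma b_card: "E8_b k = card (NF k)"
  unfolding E8_b_def elems_eq using card_image[OF class_inj] by simp

lemma bi_card: "E8_bi k i = card (NFi k i)"
proof -
  have "inj_on E8_class (NFi k i)" using class_inj by (rule inj_on_subset) (auto simp: NFi_def)
  then show ?thesis unfolding E8_bi_def bi_set using card_image by blast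
qed

lemma sum_lemma:
  assumes "k \<ge> 1"
  shows "card {w \<in> NF k. hd w \<in> B} = (\<Sum>i\<in>B \<inter> {1..8}. card (NFi k i))"
proof -
  have eq: "{w \<in> NF k. hd w \<in> B} = (\<Union>i\<in>B \<inter> {1..8}. NFi k i)"
  proof
    show "{w \<in> NF k. hd w \<in> B} \<subseteq> (\<Union>i\<in>B \<inter> {1..8}. NFi k i)"
    proof
      fix w assume w: "w \<in> {w \<in> NF k. hd w \<in> B}"
      then have "w \<noteq> []" "set w \<subseteq> {1..8}" using assms unfolding NF_def by auto
      then have "hd w \<in> {1..8}" by (cases w) auto
      then show "w \<in> (\<Union>i\<in>B \<inter> {1..8}. NFi k i)" using w \<open>w \<noteq> []\<close> unfolding NFi_def by auto
    qed
  qed (auto simp: NFi_def)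
  have "card (\<Union>i\<in>B \<inter> {1..8}. NFi k i) = (\<Sum>i\<in>B \<inter> {1..8}. card (NFi k i))"
    by (rule card_UN_disjoint) (auto simp: NFi_def intro: finite_subset[OF _ NF_fin])
  then show ?thesis using eq by simp
qed

definition A :: "nat \<Rightarrow> nat set" where
  "A j = {i. \<not> (i < j \<and> \<not> E8_adj i j)}"

lemma rec_lemma:
  assumes "k \<ge> 2" "j \<in> {1..8}"
  shows "card (NFi k j) = card {v \<in> NF (k-1). hd v \<in> A j}"
proof -
  have "NFi k j = Cons j ` {v \<in> NF (k-1). hd v \<in> A j}"
  proof
    show "NFi k j \<subseteq> Cons j ` {v \<in> NF (k-1). hd v \<in> A j}"
    proof
      fix w assume w: "w \<in> NFi k j"
      then obtain v where v: "w = j#v" unfolding NFi_def by (cases w) auto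
      have "length v = k - 1" using w v unfolding NFi_def NF_def by auto
      then obtain i v1 where iv: "v = i#v1" using assms by (cases v) auto
      have n: "isnf (j#i#v1)" using w v iv unfolding NFi_def NF_def by auto
      have "v \<in> {v \<in> NF (k-1). hd v \<in> A j}"
        using nf_tl[OF n] nf_hd[OF n] w v iv unfolding NFi_def NF_def A_def by auto
      then show "w \<in> Cons j ` {v \<in> NF (k-1). hd v \<in> A j}" using v by auto
    qed
  next
    show "Cons j ` {v \<in> NF (k-1). hd v \<in> A j} \<subseteq> NFi k j"
    proof
      fix w assume "w \<in> Cons j ` {v \<in> NF (k-1). hd v \<in> A j}"
      then obtain v where v: "w = j#v" "v \<in> NF (k-1)" "hd v \<in> A j" by auto
      then obtain i v1 where iv: "v = i#v1" using assms unfolding NF_def by (cases v) auto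
      have "isnf (j#i#v1)" using nf_cons v iv unfolding NF_def A_def by auto
      then show "w \<in> NFi k j" using v iv assms unfolding NFi_def NF_def by auto
    qed
  qed
  then show ?thesis by (simp add: card_image)
qed

lemma A_ne5: "j \<in> {1..8} \<Longrightarrow> j \<noteq> 5 \<Longrightarrow> A j \<inter> {1..8} = {max 1 (j - 1)..8}"
proof -
  assume "j \<in> {1..8}" "j \<noteq> 5"
  then have "j = 1 \<or> j = 2 \<or> j = 3 \<or> j = 4 \<or> j = 6 \<or> j = 7 \<or> j = 8" by auto
  then show ?thesis by (elim disjE) (auto simp: A_def adj_iff)
qed

lemma A_5: "A 5 \<inter> {1..8} = insert 3 {5..8}"
  by (auto simp: A_def adj_iff)

theorem lemma9:
  shows "E8_b 0 = 1 \<and>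
    (\<forall>i\<in>{1..8}. E8_bi 1 i = 1) \<and>
    (\<forall>k\<ge>1. E8_b k = (\<Sum>i=1..8. E8_bi k i)) \<and>
    (\<forall>k\<ge>2. \<forall>j\<in>{1..8}. j \<noteq> 5 \<longrightarrow>
           E8_bi k j = (\<Sum>i=max 1 (j - 1)..8. E8_bi (k - 1) i)) \<and>
    (\<forall>k\<ge>2. E8_bi k 5 = E8_bi (k - 1) 3 + (\<Sum>i=5..8. E8_bi (k - 1) i))"
proof (intro conjI allI ballI impI)
  have "NF 0 = {[]}" unfolding NF_def isnf_def by auto
  then show "E8_b 0 = 1" by (simp add: b_card)
next
  fix i :: nat assume i: "i \<in> {1..8}"
  have "isnf [i]" unfolding isnf_def
  proof (intro allI impI)
    fix v assume h: "E8_step\<^sup>*\<^sup>* [i] v"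
    have "length v = 1" "set v = {i}" using eqv_len[OF h] eqv_set[OF h] by auto
    then have "v = [i]" by (cases v) auto
    then show "[i] \<le> v" by simp
  qed
  then have "NFi 1 i = {[i]}" using i unfolding NFi_def NF_def
    by (auto simp: length_Suc_conv)
  then show "E8_bi 1 i = 1" by (simp add: bi_card)
next
  fix k :: nat assume k: "k \<ge> 1"
  have "NF k = {w \<in> NF k. hd w \<in> UNIV}" by simp
  then show "E8_b k = (\<Sum>i=1..8. E8_bi k i)"
    using sum_lemma[OF k, of UNIV] by (simp add: b_card bi_card)
next
  fix k j :: nat assume k: "k \<ge> 2" and j: "j \<in> {1..8}" and j5: "j \<noteq> 5"
  show "E8_bi k j = (\<Sum>i=max 1 (j - 1)..8. E8_bi (k - 1) i)"
    using rec_lemma[OF k j] sum_lemma[of "k-1" "A j"] k A_ne5[OF j j5] by (simp add: bi_card)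
next
  fix k :: nat assume k: "k \<ge> 2"
  have "E8_bi k 5 = (\<Sum>i\<in>insert 3 {5..8}. E8_bi (k - 1) i)"
    using rec_lemma[OF k, of 5] sum_lemma[of "k-1" "A 5"] k A_5 by (simp add: bi_card)
  then show "E8_bi k 5 = E8_bi (k - 1) 3 + (\<Sum>i=5..8. E8_bi (k - 1) i)" by simp
qed

end
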